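(* Let $q$ be a prime power, $c\in\mathbb{F}_q^*$ and $\delta\in\mathbb{F}_{q^4}$. Then $f(x)=g(x^q+x+\delta)+cx$ is a permutation polynomial of $\mathbb{F}_{q^4}$ if one of the following holds: (i) $g(x)=c_0\left(u(x)^{q^3}+u(x)^{q^2}+u(x)^q+u(x)\right)$, where $u(x)\in\mathbb{F}_{q^4}[x]$ and $c_0\in\mathbb{F}_{q^4}^*$ satisfies $c_0^q+c_0=0$; (ii) $g(x)=c_0x^{i(q^3+q^2+q+1)}$, where $i$ is a positive integer and $c_0\in\mathbb{F}_{q^4}^*$ satisfies $c_0^q+c_0=0$.
   Context: A polynomial is a permutation polynomial of a finite field if it induces a bijection of that field. $\mathbb{F}_q$ is viewed as the subfield of $\mathbb{F}_{q^4}$. *)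

theory Defs
  imports "HOL-Computational_Algebra.Polynomial" "HOL-Computational_Algebra.Primes" "HOL-Library.Cardinality"
begin

definition permutation_poly :: "'a::{field,finite} poly \<Rightarrow> bool" where
  "permutation_poly p \<longleftrightarrow> bij (poly p)"

end

theory Submission
  imports Defs "HOL-Number_Theory.Residues"
begin

hide_const (open) module.smult up_ring.monom

lemma ff_power_card:
  fixes x :: "'a::{field,finite}"
  shows "x ^ CARD('a) = x"
proof (cases "x = 0")
  case False
  have "x * (\<Prod>y\<in>UNIV-{0}. x * y) = x * x ^ (card (UNIV :: 'a set) - 1) * \<Prod>(UNIV-{0})"
    by (simp add: prod.distrib mult_ac)
  also have "x * x ^ (card (UNIV :: 'a set) - 1) = x ^ Suc (card (UNIV :: 'a set) - 1)"
    by (subst power_Suc) auto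
  also have "Suc (card (UNIV :: 'a set) - 1) = card (UNIV :: 'a set)"
    using finite_UNIV_card_ge_0[where ?'a = 'a] by simp
  also have "(\<Prod>y\<in>UNIV-{0}. x * y) = (\<Prod>y\<in>UNIV-{0}. y)"
    by (rule prod.reindex_bij_witness[of _ "\<lambda>y. y / x" "\<lambda>y. x * y"]) (use False in auto)
  finally show ?thesis
    by simp
qed (use finite_UNIV_card_ge_0[where ?'a = 'a] in auto)

theorem proposition6:
  fixes q :: nat and c \<delta> :: "'a::{field,finite}" and g :: "'a poly"
  assumes q_pp: "\<exists>p k. prime p \<and> k > 0 \<and> q = p ^ k"
    and card: "CARD('a) = q ^ 4"
    and c_nz: "c \<noteq> 0" and c_Fq: "c ^ q = c"
    and g_cases:
      "(\<exists>u c0. c0 \<noteq> 0 \<and> c0 ^ q + c0 = 0 \<and>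
               g = smult c0 (u ^ (q ^ 3) + u ^ (q ^ 2) + u ^ q + u))
       \<or> (\<exists>i c0. i > 0 \<and> c0 \<noteq> 0 \<and> c0 ^ q + c0 = 0 \<and>
               g = monom c0 (i * (q ^ 3 + q ^ 2 + q + 1)))"
  shows "permutation_poly (pcompose g (monom 1 q + [:\<delta>, 1:]) + [:0, c:])"
proof -
  obtain p k where pk: "prime p" "k > 0" "q = p ^ k" using q_pp by blast
  have cpos: "CHAR('a) > 0" by (rule finite_imp_CHAR_pos) simp
  have cpr: "prime CHAR('a)" using cpos prime_CHAR_semidom by blast
  have "CHAR('a) dvd p ^ (k * 4)" using CHAR_dvd_CARD[where 'a='a] card pk
    by (simp add: power_mult)
  hence "CHAR('a) dvd p" using cpr prime_dvd_power by blast
  hence cp: "CHAR('a) = p" using cpr pk(1) primes_dvd_imp_eq by blast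
  have qpos: "q > 0" using pk prime_gt_0_nat by simp
  have add: "(a + b) ^ q = a ^ q + b ^ q" for a b :: 'a
    using freshmans_dream'[OF cpr, of q k] pk cp by simp
  have neg: "(- a) ^ q = - (a ^ q)" for a :: 'a
  proof -
    have "0 = (a + - a) ^ q" using qpos by simp
    also have "\<dots> = a ^ q + (- a) ^ q" by (rule add)
    finally show ?thesis by (simp add: eq_neg_iff_add_eq_0 add.commute)
  qed
  have sub: "(a - b) ^ q = a ^ q - b ^ q" for a b :: 'a
    using add[of a "-b"] neg[of b] by simp
  have q4: "a ^ (q ^ 4) = a" for a :: 'a using ff_power_card[of a] card by simp
  have key: "(poly g z) ^ q = - poly g z" for z
    using g_cases
  proof
    assume "\<exists>u c0. c0 \<noteq> 0 \<and> c0 ^ q + c0 = 0 \<and>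
               g = smult c0 (u ^ (q ^ 3) + u ^ (q ^ 2) + u ^ q + u)"
    then obtain u c0 where h: "c0 ^ q + c0 = 0"
      "g = smult c0 (u ^ (q ^ 3) + u ^ (q ^ 2) + u ^ q + u)" by blast
    define a where "a = poly u z"
    have pg: "poly g z = c0 * (a ^ (q ^ 3) + a ^ (q ^ 2) + a ^ q + a)"
      using h(2) by (simp add: a_def poly_power)
    have e1: "(a ^ (q^3)) ^ q = a" using q4[of a]
      by (simp add: power_mult[symmetric] power_Suc2[symmetric] numeral_eq_Suc mult_ac)
    have e2: "(a ^ (q^2)) ^ q = a ^ (q^3)"
      by (simp add: power_mult[symmetric] power_Suc2[symmetric] numeral_eq_Suc mult_ac)
    have e3: "(a ^ q) ^ q = a ^ (q^2)"
      by (simp add: power_mult[symmetric] power2_eq_square)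
    have c0q: "c0 ^ q = - c0" using h(1) by (simp add: eq_neg_iff_add_eq_0)
    show ?thesis unfolding pg power_mult_distrib add e1 e2 e3 c0q
      by (simp add: algebra_simps)
  next
    assume "\<exists>i c0. i > 0 \<and> c0 \<noteq> 0 \<and> c0 ^ q + c0 = 0 \<and>
               g = monom c0 (i * (q ^ 3 + q ^ 2 + q + 1))"
    then obtain i c0 where h: "c0 ^ q + c0 = 0"
      "g = monom c0 (i * (q ^ 3 + q ^ 2 + q + 1))" by blast
    have c0q: "c0 ^ q = - c0" using h(1) by (simp add: eq_neg_iff_add_eq_0)
    have "i * (q ^ 3 + q ^ 2 + q + 1) * q = q^4 * i + i * (q ^ 3 + q ^ 2 + q)"
      by (simp add: algebra_simps power_Suc2[symmetric] numeral_eq_Suc power2_eq_square)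
    hence "(z ^ (i * (q ^ 3 + q ^ 2 + q + 1))) ^ q
        = (z ^ (q^4)) ^ i * z ^ (i * (q ^ 3 + q ^ 2 + q))"
      by (simp only: power_mult[symmetric] power_add)
    also have "\<dots> = z ^ (i * (q ^ 3 + q ^ 2 + q + 1))"
      by (simp add: q4 power_add[symmetric] algebra_simps)
    finally have zz: "(z ^ (i * (q ^ 3 + q ^ 2 + q + 1))) ^ q = z ^ (i * (q ^ 3 + q ^ 2 + q + 1))" .
    have "poly g z = c0 * z ^ (i * (q ^ 3 + q ^ 2 + q + 1))" using h(2) by (simp only: poly_monom)
    thus ?thesis by (simp only: power_mult_distrib zz c0q) simp
  qed
  define L where "L x = x ^ q + x + \<delta>" for x :: 'a
  have pf: "poly (pcompose g (monom 1 q + [:\<delta>, 1:]) + [:0, c:]) x = poly g (L x) + c * x" for x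
    by (simp add: poly_pcompose poly_monom L_def algebra_simps)
  have "inj (poly (pcompose g (monom 1 q + [:\<delta>, 1:]) + [:0, c:]))"
  proof (rule injI)
    fix x y assume "poly (pcompose g (monom 1 q + [:\<delta>, 1:]) + [:0, c:]) x =
       poly (pcompose g (monom 1 q + [:\<delta>, 1:]) + [:0, c:]) y"
    hence e: "c * (x - y) = poly g (L y) - poly g (L x)" unfolding pf by (simp add: algebra_simps)
    hence "(c * (x - y)) ^ q = - (c * (x - y))" using key[of "L y"] key[of "L x"]
      by (simp add: sub)
    hence "c * (x - y) ^ q = - (c * (x - y))"
      by (simp only: power_mult_distrib c_Fq)
    hence "c * ((x - y) ^ q + (x - y)) = 0"
      by (simp add: distrib_left)
    hence "(x - y) ^ q + (x - y) = 0" using c_nz by simp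
    hence "L x = L y" unfolding L_def sub by (simp add: algebra_simps)
    hence "c * (x - y) = 0" using e by simp
    thus "x = y" using c_nz by simp
  qed
  thus ?thesis unfolding permutation_poly_def
    using finite_UNIV_inj_surj[of "poly (pcompose g (monom 1 q + [:\<delta>, 1:]) + [:0, c:])"]
    by (simp add: bij_def)
qed

end
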